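(* If $(S,K,I)$ is a split graph, then the factor graph $\Phi(S)$ cannot contain an induced path $v_1v_2v_3v_4$ with $\sigma_{23}=1$ and $d_1\leq d_2\geq d_4$.
   Context: A split graph $(S,K,I)$ is a graph $S$ together with a fixed partition $V(S)=K\dot\cup I$, where $K$ is a clique and $I$ is an independent set. For a vertex $v_i$ of $S$, $N_i$ denotes its open neighborhood in $S$ and $d_i=|N_i|$; $\eta_{uv}=|N_u\cap N_v|$. The factor graph $\Phi(S)$ is the loopless multigraph with vertex set $I$ in which, for distinct $u,v\in I$, there is one edge joining $u$ and $v$ for each 2-switch of $S$ acting on $u$ and $v$ (a 2-switch replaces edges $ab,cd$ with $ac,bd$ when $ab,cd\in E(S)$ and $ac,bd\notin E(S)$); equivalently, the multiplicity of $uv$ is $\sigma_{uv}=(d_u-\eta_{uv})(d_v-\eta_{uv})$, and $u,v$ are adjacent iff $\sigma_{uv}>0$; $\sigma_{ij}$ denotes $\sigma_{v_iv_j}$. An induced path in $\Phi(S)$ consists of distinct vertices with consecutive ones adjacent and no other pair adjacent (multiplicities ignored). *)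

theory Defs
  imports Main
begin

definition simple_graph :: "'a set \<Rightarrow> ('a \<Rightarrow> 'a \<Rightarrow> bool) \<Rightarrow> bool" where
  "simple_graph V E \<longleftrightarrow> finite V \<and> (\<forall>u v. E u v \<longrightarrow> u \<in> V \<and> v \<in> V)
     \<and> (\<forall>u v. E u v \<longrightarrow> E v u) \<and> (\<forall>v. \<not> E v v)"

definition split_graph :: "'a set \<Rightarrow> ('a \<Rightarrow> 'a \<Rightarrow> bool) \<Rightarrow> 'a set \<Rightarrow> 'a set \<Rightarrow> bool" where
  "split_graph V E K I \<longleftrightarrow> simple_graph V E \<and> K \<union> I = V \<and> K \<inter> I = {}
     \<and> (\<forall>u\<in>K. \<forall>v\<in>K. u \<noteq> v \<longrightarrow> E u v)
     \<and> (\<forall>u\<in>I. \<forall>v\<in>I. \<not> E u v)"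

definition nbhd :: "'a set \<Rightarrow> ('a \<Rightarrow> 'a \<Rightarrow> bool) \<Rightarrow> 'a \<Rightarrow> 'a set" where
  "nbhd V E v = {w \<in> V. E v w}"

definition deg :: "'a set \<Rightarrow> ('a \<Rightarrow> 'a \<Rightarrow> bool) \<Rightarrow> 'a \<Rightarrow> nat" where
  "deg V E v = card (nbhd V E v)"

definition eta :: "'a set \<Rightarrow> ('a \<Rightarrow> 'a \<Rightarrow> bool) \<Rightarrow> 'a \<Rightarrow> 'a \<Rightarrow> nat" where
  "eta V E u v = card (nbhd V E u \<inter> nbhd V E v)"

text \<open>Multiplicity of the edge uv in the factor graph.\<close>
definition sigma :: "'a set \<Rightarrow> ('a \<Rightarrow> 'a \<Rightarrow> bool) \<Rightarrow> 'a \<Rightarrow> 'a \<Rightarrow> nat" where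
  "sigma V E u v = (deg V E u - eta V E u v) * (deg V E v - eta V E u v)"

definition factor_adj :: "'a set \<Rightarrow> ('a \<Rightarrow> 'a \<Rightarrow> bool) \<Rightarrow> 'a set \<Rightarrow> 'a \<Rightarrow> 'a \<Rightarrow> bool" where
  "factor_adj V E I u v \<longleftrightarrow> u \<in> I \<and> v \<in> I \<and> u \<noteq> v \<and> sigma V E u v > 0"

definition factor_induced_path :: "'a set \<Rightarrow> ('a \<Rightarrow> 'a \<Rightarrow> bool) \<Rightarrow> 'a set \<Rightarrow> 'a list \<Rightarrow> bool" where
  "factor_induced_path V E I ps \<longleftrightarrow> distinct ps \<and> set ps \<subseteq> I
     \<and> (\<forall>i j. i < length ps \<and> j < length ps \<longrightarrow>
          (factor_adj V E I (ps ! i) (ps ! j) \<longleftrightarrow> (i = j + 1 \<or> j = i + 1)))"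

end

theory Submission
  imports Defs
begin

lemma sig_eq:
  assumes "finite V"
  shows "sigma V E u v = card (nbhd V E u - nbhd V E v) * card (nbhd V E v - nbhd V E u)"
proof -
  have f: "finite (nbhd V E w)" for w using assms unfolding nbhd_def by auto
  show ?thesis unfolding sigma_def eta_def deg_def
    using card_Diff_subset_Int[of "nbhd V E u" "nbhd V E v"]
          card_Diff_subset_Int[of "nbhd V E v" "nbhd V E u"] f
    by (simp add: Int_commute)
qed

lemma adj_iff:
  assumes "finite V" "u \<in> I" "v \<in> I" "u \<noteq> v"
  shows "factor_adj V E I u v \<longleftrightarrow> \<not> (nbhd V E u \<subseteq> nbhd V E v) \<and> \<not> (nbhd V E v \<subseteq> nbhd V E u)"
proof -
  have f: "finite (nbhd V E w)" for w using assms unfolding nbhd_def by auto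
  have g: "finite (nbhd V E u - nbhd V E v)" "finite (nbhd V E v - nbhd V E u)" using f by auto
  show ?thesis unfolding factor_adj_def sig_eq[OF assms(1)] using assms
    by (auto simp: card_gt_0_iff g)
qed

theorem lemma4p2:
  fixes V K I :: "'a set" and E :: "'a \<Rightarrow> 'a \<Rightarrow> bool"
  assumes "split_graph V E K I"
  shows "\<not> (\<exists>v1 v2 v3 v4. factor_induced_path V E I [v1, v2, v3, v4]
              \<and> sigma V E v2 v3 = 1
              \<and> deg V E v1 \<le> deg V E v2 \<and> deg V E v4 \<le> deg V E v2)"
proof
  assume "\<exists>v1 v2 v3 v4. factor_induced_path V E I [v1, v2, v3, v4]
              \<and> sigma V E v2 v3 = 1
              \<and> deg V E v1 \<le> deg V E v2 \<and> deg V E v4 \<le> deg V E v2"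
  then obtain v1 v2 v3 v4 where P: "factor_induced_path V E I [v1, v2, v3, v4]"
    and s: "sigma V E v2 v3 = 1" and d1: "deg V E v1 \<le> deg V E v2"
    and d4: "deg V E v4 \<le> deg V E v2" by blast
  have fV: "finite V" using assms unfolding split_graph_def simple_graph_def by auto
  define A where "A = nbhd V E"
  have f: "finite (A w)" for w using fV unfolding A_def nbhd_def by auto
  have dA: "deg V E w = card (A w)" for w unfolding A_def deg_def by simp
  have dist: "distinct [v1,v2,v3,v4]" and inI: "set [v1,v2,v3,v4] \<subseteq> I"
    and Q: "\<And>i j. i < 4 \<Longrightarrow> j < 4 \<Longrightarrow> factor_adj V E I ([v1,v2,v3,v4] ! i) ([v1,v2,v3,v4] ! j) \<longleftrightarrow> (i = j + 1 \<or> j = i + 1)"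
    using P unfolding factor_induced_path_def by auto
  have a13: "\<not> factor_adj V E I v1 v3" using Q[of 0 2] by simp
  have a24: "\<not> factor_adj V E I v2 v4" using Q[of 1 3] by simp
  have a14: "\<not> factor_adj V E I v1 v4" using Q[of 0 3] by simp
  have a12: "factor_adj V E I v1 v2" using Q[of 0 1] by simp
  have a34: "factor_adj V E I v3 v4" using Q[of 2 3] by simp
  note adj = adj_iff[OF fV, of _ I _ E, unfolded A_def[symmetric]]
  have c13: "A v1 \<subseteq> A v3 \<or> A v3 \<subseteq> A v1" using a13 adj[of v1 v3] dist inI by auto
  have c24: "A v2 \<subseteq> A v4 \<or> A v4 \<subseteq> A v2" using a24 adj[of v2 v4] dist inI by auto
  have c14: "A v1 \<subseteq> A v4 \<or> A v4 \<subseteq> A v1" using a14 adj[of v1 v4] dist inI by auto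
  have n12: "\<not> A v1 \<subseteq> A v2" using a12 adj[of v1 v2] dist inI by auto
  have n34: "\<not> A v4 \<subseteq> A v3" using a34 adj[of v3 v4] dist inI by auto
  have s2: "card (A v2 - A v3) * card (A v3 - A v2) = 1" using s sig_eq[OF fV] A_def by simp
  hence c1: "card (A v2 - A v3) = 1" and c2: "card (A v3 - A v2) = 1" by auto
  then obtain x y where x: "A v2 - A v3 = {x}" and y: "A v3 - A v2 = {y}"
    by (meson card_1_singletonE)
  have "card (A v2) = card (A v2 \<inter> A v3) + card (A v2 - A v3)"
    using f card_Int_Diff by blast
  moreover have "card (A v3) = card (A v3 \<inter> A v2) + card (A v3 - A v2)"
    using f card_Int_Diff by blast
  ultimately have eq23: "card (A v2) = card (A v3)" using c1 c2 by (simp add: Int_commute)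
  have s42: "A v4 \<subseteq> A v2"
  proof (cases "A v4 \<subseteq> A v2")
    case False
    with c24 have "A v2 \<subseteq> A v4" by auto
    moreover have "card (A v4) \<le> card (A v2)" using d4 dA by simp
    ultimately have "A v2 = A v4" using f card_subset_eq by (metis antisym card_mono)
    thus ?thesis by simp
  qed
  have s13: "A v1 \<subseteq> A v3"
  proof (cases "A v1 \<subseteq> A v3")
    case False
    with c13 have "A v3 \<subseteq> A v1" by auto
    moreover have "card (A v1) \<le> card (A v3)" using d1 dA eq23 by simp
    ultimately have "A v3 = A v1" using f card_subset_eq by (metis antisym card_mono)
    thus ?thesis by simp
  qed
  have x4: "x \<in> A v4"
  proof -
    obtain z where "z \<in> A v4" "z \<notin> A v3" using n34 by blast
    hence "z \<in> A v2 - A v3" using s42 by blast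
    thus ?thesis using x \<open>z \<in> A v4\<close> by simp
  qed
  have y1: "y \<in> A v1"
  proof -
    obtain z where "z \<in> A v1" "z \<notin> A v2" using n12 by blast
    hence "z \<in> A v3 - A v2" using s13 by blast
    thus ?thesis using y \<open>z \<in> A v1\<close> by simp
  qed
  show False using c14 x4 y1 x y s42 s13 by blast
qed

end
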